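(* With $\varepsilon,N,q,P_{(0)},d$ as in the context, assume $4d^2<1$ and put $w_\pm=\frac{-1\pm\sqrt{1-4d^2}}{2d^2}$. Then $\hat R(w_\pm)=I+w_\pm P_{(0)}$ satisfy the braid equation $$\hat R_{12}(w_\pm)\hat R_{23}(w_\pm)\hat R_{12}(w_\pm)=\hat R_{23}(w_\pm)\hat R_{12}(w_\pm)\hat R_{23}(w_\pm),$$ and $\hat R(w_+)\hat R(w_-)=I$. Moreover, for every $w\in\mathbb C$, $\hat R(w)=\frac{(w-w_-)\hat R(w_+)-(w-w_+)\hat R(w_-)}{w_+-w_-}$.
   Context: Let $\varepsilon\in\{1,-1\}$, $N\ge 2$ (with $N=2n$ even if $\varepsilon=-1$), $q>0$, $[x]=(q^x-q^{-x})/(q-q^{-1})$ ($[x]=x$ if $q=1$). Define $\rho=(n-\tfrac12,\dots,\tfrac12,0,-\tfrac12,\dots,-n+\tfrac12)$ if $\varepsilon=1,N=2n+1$; $\rho=(n-1,\dots,1,0,0,-1,\dots,-n+1)$ if $\varepsilon=1,N=2n$; $\rho=(n,\dots,1,-1,\dots,-n)$ if $\varepsilon=-1,N=2n$. Let $\epsilon_i=1$ for all $i$ if $\varepsilon=1$; $\epsilon_i=1$ for $i\le n$ and $-1$ for $i>n$ if $\varepsilon=-1$. With $i'=N+1-i$ and matrix units $E_{ij}$, $P_{(0)}=(1+\varepsilon[N-\varepsilon])^{-1}\sum_{i,j}q^{\rho_i-\rho_j}\epsilon_i\epsilon_jE_{i',j}\otimes E_{i,j'}$ on $\mathbb C^N\otimes\mathbb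 C^N$; $1+\varepsilon[N-\varepsilon]\neq0$ is assumed and $d=(1+\varepsilon[N-\varepsilon])^{-1}$. $\hat R(w)=I+wP_{(0)}$; $A_{12}=A\otimes I$, $A_{23}=I\otimes A$. *)

theory Defs
  imports Complex_Main
begin

definition qnum :: "real \<Rightarrow> real \<Rightarrow> real" where
  "qnum q x = (if q = 1 then x else (q powr x - q powr (-x)) / (q - 1 / q))"

definition rho :: "int \<Rightarrow> nat \<Rightarrow> nat \<Rightarrow> real" where
  "rho eps N i = (let n = N div 2 in
     if eps = 1 \<and> odd N then
       (if i \<le> n then real n + 1/2 - real i
        else if i = n + 1 then 0
        else real n + 3/2 - real i)
     else if eps = 1 then
       (if i \<le> n then real n - real i else real n + 1 - real i)
     else
       (if i \<le> n then real n + 1 - real i else real n - real i))"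

definition sgn_i :: "int \<Rightarrow> nat \<Rightarrow> nat \<Rightarrow> real" where
  "sgn_i eps N i = (if eps = -1 \<and> i > N div 2 then -1 else 1)"

definition dconst :: "int \<Rightarrow> nat \<Rightarrow> real \<Rightarrow> real" where
  "dconst eps N q = 1 / (1 + real_of_int eps * qnum q (real N - real_of_int eps))"

text \<open>Operators on C^N (x) C^N as matrices indexed by pairs in {1..N} x {1..N};
  entry ((a,b),(c,e)) is the coefficient of e_a (x) e_b in the image of e_c (x) e_e.
  P_(0) = d * sum_{i,j} q^(rho_i - rho_j) eps_i eps_j E_{i',j} (x) E_{i,j'}, with i' = N+1-i.\<close>
definition P0 :: "int \<Rightarrow> nat \<Rightarrow> real \<Rightarrow> nat \<times> nat \<Rightarrow> nat \<times> nat \<Rightarrow> complex" where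
  "P0 eps N q x y = (case x of (a, b) \<Rightarrow> case y of (c, e) \<Rightarrow>
     complex_of_real (dconst eps N q *
       (\<Sum>i\<in>{1..N}. \<Sum>j\<in>{1..N}.
          (if a = N + 1 - i \<and> b = i \<and> c = j \<and> e = N + 1 - j
           then q powr (rho eps N i - rho eps N j) * sgn_i eps N i * sgn_i eps N j
           else 0))))"

definition idm :: "'i \<Rightarrow> 'i \<Rightarrow> complex" where
  "idm x y = (if x = y then 1 else 0)"

definition Rhat :: "int \<Rightarrow> nat \<Rightarrow> real \<Rightarrow> complex \<Rightarrow> nat \<times> nat \<Rightarrow> nat \<times> nat \<Rightarrow> complex" where
  "Rhat eps N q w x y = idm x y + w * P0 eps N q x y"

definition mmul :: "'i set \<Rightarrow> ('i \<Rightarrow> 'i \<Rightarrow> complex) \<Rightarrow> ('i \<Rightarrow> 'i \<Rightarrow> complex) \<Rightarrow> 'i \<Rightarrow> 'i \<Rightarrow> complex" where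
  "mmul S A B x y = (\<Sum>z\<in>S. A x z * B z y)"

definition pairs :: "nat \<Rightarrow> (nat \<times> nat) set" where
  "pairs N = {1..N} \<times> {1..N}"

definition triples :: "nat \<Rightarrow> (nat \<times> nat \<times> nat) set" where
  "triples N = {1..N} \<times> {1..N} \<times> {1..N}"

definition op12 :: "(nat \<times> nat \<Rightarrow> nat \<times> nat \<Rightarrow> complex) \<Rightarrow> nat \<times> nat \<times> nat \<Rightarrow> nat \<times> nat \<times> nat \<Rightarrow> complex" where
  "op12 A x y = (case x of (a, b, c) \<Rightarrow> case y of (a', b', c') \<Rightarrow> A (a, b) (a', b') * idm c c')"

definition op23 :: "(nat \<times> nat \<Rightarrow> nat \<times> nat \<Rightarrow> complex) \<Rightarrow> nat \<times> nat \<times> nat \<Rightarrow> nat \<times> nat \<times> nat \<Rightarrow> complex" where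
  "op23 A x y = (case x of (a, b, c) \<Rightarrow> case y of (a', b', c') \<Rightarrow> idm a a' * A (b, c) (b', c'))"

end

theory Submission
  imports Defs
begin



lemma mm_add_left: "mmul S (\<lambda>x y. X x y + Y x y) Z = (\<lambda>x y. mmul S X Z x y + mmul S Y Z x y)"
  by (simp add: mmul_def fun_eq_iff algebra_simps sum.distrib)
lemma mm_add_right: "mmul S Z (\<lambda>x y. X x y + Y x y) = (\<lambda>x y. mmul S Z X x y + mmul S Z Y x y)"
  by (simp add: mmul_def fun_eq_iff algebra_simps sum.distrib)
lemma mm_scal_left: "mmul S (\<lambda>x y. c * X x y) Z = (\<lambda>x y. c * mmul S X Z x y)"
  by (simp add: mmul_def fun_eq_iff algebra_simps sum_distrib_left)
lemma mm_scal_right: "mmul S Z (\<lambda>x y. c * X x y) = (\<lambda>x y. c * mmul S Z X x y)"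
  by (simp add: mmul_def fun_eq_iff algebra_simps sum_distrib_left)
lemma mm_assoc: "mmul S (mmul S X Y) Z = mmul S X (mmul S Y Z)"
proof (intro ext)
  fix x y
  have "mmul S (mmul S X Y) Z x y = (\<Sum>z\<in>S. \<Sum>u\<in>S. X x u * Y u z * Z z y)"
    by (simp add: mmul_def sum_distrib_right)
  also have "\<dots> = (\<Sum>u\<in>S. \<Sum>z\<in>S. X x u * Y u z * Z z y)"
    by (rule sum.swap)
  also have "\<dots> = mmul S X (mmul S Y Z) x y"
    by (simp add: mmul_def sum_distrib_left mult.assoc)
  finally show "mmul S (mmul S X Y) Z x y = mmul S X (mmul S Y Z) x y" .
qed
lemma ifm1: "(if P then 1 else 0) * (a::complex) = (if P then a else 0)" by simp
lemma ifm2: "(a::complex) * (if P then 1 else 0) = (if P then a else 0)" by simp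
lemma mm_idl: "finite S \<Longrightarrow> x \<in> S \<Longrightarrow> mmul S idm Z x y = Z x y"
  by (simp add: mmul_def idm_def ifm1 ifm2)
lemma mm_idr: "finite S \<Longrightarrow> y \<in> S \<Longrightarrow> mmul S Z idm x y = Z x y"
  by (simp add: mmul_def idm_def ifm1 ifm2)
lemma mm_idl2: "finite S \<Longrightarrow> mmul S Z (mmul S idm X) = mmul S Z X"
  by (simp add: mmul_def fun_eq_iff idm_def ifm1 ifm2)
lemma mm_idr2: "finite S \<Longrightarrow> y \<in> S \<Longrightarrow> mmul S Z (mmul S X idm) x y = mmul S Z X x y"
  by (simp add: mmul_def idm_def ifm1 ifm2)
lemma mm_idr3: "finite S \<Longrightarrow> y \<in> S \<Longrightarrow> mmul S Z (mmul S W (mmul S X idm)) x y = mmul S Z (mmul S W X) x y"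
  by (simp add: mmul_def idm_def ifm1 ifm2)

lemma mm_cong_left: "(\<And>z. z \<in> S \<Longrightarrow> M x z = M' x z) \<Longrightarrow> mmul S M Z x y = mmul S M' Z x y"
  by (simp add: mmul_def)

lemma prod2:
  assumes fin: "finite S" and xS: "x \<in> S" and yS: "y \<in> S"
  shows "mmul S (\<lambda>x y. idm x y + a * X x y) (\<lambda>x y. idm x y + b * Y x y) x y
       = idm x y + a * X x y + b * Y x y + a * b * mmul S X Y x y"
proof -
  have "mmul S (\<lambda>x y. idm x y + a * X x y) (\<lambda>x y. idm x y + b * Y x y) x y
     = mmul S idm idm x y + b * mmul S idm Y x y + (a * mmul S X idm x y + a * (b * mmul S X Y x y))"
    by (simp only: mm_add_left mm_add_right mm_scal_left mm_scal_right)
  also have "\<dots> = idm x y + b * Y x y + (a * X x y + a * (b * mmul S X Y x y))"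
    by (simp only: mm_idl[OF fin xS] mm_idr[OF fin yS])
  finally show ?thesis by (simp add: algebra_simps)
qed

lemma prod3:
  assumes fin: "finite S" and xS: "x \<in> S" and yS: "y \<in> S"
    and AA: "mmul S A A x y = A x y"
    and ABA: "mmul S A (mmul S B A) x y = c * A x y"
  shows "mmul S (mmul S (\<lambda>x y. idm x y + w * A x y) (\<lambda>x y. idm x y + w * B x y)) (\<lambda>x y. idm x y + w * A x y) x y
       = idm x y + (2 * w + w^2 + c * w^3) * A x y + w * B x y + w^2 * mmul S A B x y + w^2 * mmul S B A x y"
proof -
  let ?T = "\<lambda>x y. idm x y + (w * A x y + (w * B x y + w^2 * mmul S A B x y))"
  have "mmul S (mmul S (\<lambda>x y. idm x y + w * A x y) (\<lambda>x y. idm x y + w * B x y)) (\<lambda>x y. idm x y + w * A x y) x y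
     = mmul S ?T (\<lambda>x y. idm x y + w * A x y) x y"
    by (rule mm_cong_left) (simp add: prod2[OF fin xS] power2_eq_square algebra_simps)
  also have "\<dots> = mmul S idm idm x y + w * mmul S idm A x y + (w * mmul S A idm x y + w * (w * mmul S A A x y)
      + ((w * mmul S B idm x y + w * (w * mmul S B A x y)) + (w^2 * mmul S (mmul S A B) idm x y + w^2 * (w * mmul S (mmul S A B) A x y))))"
    by (simp only: mm_add_left mm_add_right mm_scal_left mm_scal_right)
  also have "\<dots> = idm x y + w * A x y + (w * A x y + w * (w * A x y)
      + ((w * B x y + w * (w * mmul S B A x y)) + (w^2 * mmul S A B x y + w^2 * (w * (c * A x y)))))"
    by (simp only: mm_idl[OF fin xS] mm_idr[OF fin yS] mm_idr2[OF fin yS] AA mm_assoc ABA)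
  finally show ?thesis by (simp add: algebra_simps power2_eq_square power3_eq_cube)
qed

lemma braid_abs:
  assumes fin: "finite S" and xS: "x \<in> S" and yS: "y \<in> S"
    and AA: "\<And>x y. x \<in> S \<Longrightarrow> y \<in> S \<Longrightarrow> mmul S A A x y = A x y"
    and BB: "\<And>x y. x \<in> S \<Longrightarrow> y \<in> S \<Longrightarrow> mmul S B B x y = B x y"
    and ABA: "\<And>x y. x \<in> S \<Longrightarrow> y \<in> S \<Longrightarrow> mmul S A (mmul S B A) x y = c * A x y"
    and BAB: "\<And>x y. x \<in> S \<Longrightarrow> y \<in> S \<Longrightarrow> mmul S B (mmul S A B) x y = c * B x y"
    and w: "w + w^2 + c * w^3 = 0"
  shows "mmul S (mmul S (\<lambda>x y. idm x y + w * A x y) (\<lambda>x y. idm x y + w * B x y)) (\<lambda>x y. idm x y + w * A x y) x y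
       = mmul S (mmul S (\<lambda>x y. idm x y + w * B x y) (\<lambda>x y. idm x y + w * A x y)) (\<lambda>x y. idm x y + w * B x y) x y"
proof -
  have e: "2 * w + w^2 + c * w^3 = w" using w by (simp add: algebra_simps)
  show ?thesis
    unfolding prod3[OF fin xS yS AA[OF xS yS] ABA[OF xS yS]] prod3[OF fin xS yS BB[OF xS yS] BAB[OF xS yS]] e
    by (simp add: algebra_simps)
qed



definition FF :: "nat \<Rightarrow> (nat \<Rightarrow> complex) \<Rightarrow> nat \<times> nat \<Rightarrow> complex" where
  "FF N f x = (case x of (a,b) \<Rightarrow> if b \<in> {1..N} \<and> a = N + 1 - b then f b else 0)"
definition GG :: "nat \<Rightarrow> (nat \<Rightarrow> complex) \<Rightarrow> nat \<times> nat \<Rightarrow> complex" where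
  "GG N g x = (case x of (c,e) \<Rightarrow> if c \<in> {1..N} \<and> e = N + 1 - c then g c else 0)"

lemma sum_delta_gen: "finite S \<Longrightarrow> (\<And>j. j \<in> S \<Longrightarrow> j \<noteq> c \<Longrightarrow> f j = 0) \<Longrightarrow> sum f S = (if c \<in> S then f c else 0)"
proof -
  assume fin: "finite S" and z: "\<And>j. j \<in> S \<Longrightarrow> j \<noteq> c \<Longrightarrow> f j = 0"
  have "sum f S = (\<Sum>j\<in>S. if j = c then f c else 0)"
    by (rule sum.cong) (auto simp: z)
  then show ?thesis using fin by simp
qed

lemma P0_eq: "P0 eps N q x y = complex_of_real (dconst eps N q) *
   FF N (\<lambda>b. complex_of_real (q powr rho eps N b * sgn_i eps N b)) x *
   GG N (\<lambda>c. complex_of_real (q powr (- rho eps N c) * sgn_i eps N c)) y"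
proof -
  obtain a b where x: "x = (a,b)" by force
  obtain c e where y: "y = (c,e)" by force
  have "(\<Sum>i\<in>{1..N}. \<Sum>j\<in>{1..N}.
          (if a = N + 1 - i \<and> b = i \<and> c = j \<and> e = N + 1 - j
           then q powr (rho eps N i - rho eps N j) * sgn_i eps N i * sgn_i eps N j
           else 0)) = (if b \<in> {1..N} \<and> a = N + 1 - b then q powr rho eps N b * sgn_i eps N b else 0) *
            (if c \<in> {1..N} \<and> e = N + 1 - c then q powr (- rho eps N c) * sgn_i eps N c else 0)"
  proof -
    let ?X = "\<lambda>i j. q powr (rho eps N i - rho eps N j) * sgn_i eps N i * sgn_i eps N j"
    have inner: "(\<Sum>j\<in>{1..N}. (if a = N + 1 - i \<and> b = i \<and> c = j \<and> e = N + 1 - j then ?X i j else 0))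
       = (if c \<in> {1..N} then (if a = N + 1 - i \<and> b = i \<and> e = N + 1 - c then ?X i c else 0) else 0)" for i
      by (subst sum_delta_gen[where c=c]) auto
    have "(\<Sum>i\<in>{1..N}. \<Sum>j\<in>{1..N}. (if a = N + 1 - i \<and> b = i \<and> c = j \<and> e = N + 1 - j then ?X i j else 0))
      = (\<Sum>i\<in>{1..N}. (if c \<in> {1..N} then (if a = N + 1 - i \<and> b = i \<and> e = N + 1 - c then ?X i c else 0) else 0))"
      by (simp only: inner)
    also have "\<dots> = (if b \<in> {1..N} then (if c \<in> {1..N} then (if a = N + 1 - b \<and> e = N + 1 - c then ?X b c else 0) else 0) else 0)"
      by (subst sum_delta_gen[where c=b]) auto
    finally show ?thesis by (simp add: powr_diff powr_minus divide_inverse)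
  qed
  then show ?thesis unfolding x y P0_def FF_def GG_def prod.case by (simp only: ) simp
qed


lemma sum_triples: "sum h (triples N) = (\<Sum>z1\<in>{1..N}. \<Sum>z2\<in>{1..N}. \<Sum>z3\<in>{1..N}. h (z1,z2,z3))"
  unfolding triples_def by (simp add: sum.cartesian_product')
lemma sum_pairs: "sum h (pairs N) = (\<Sum>z1\<in>{1..N}. \<Sum>z2\<in>{1..N}. h (z1,z2))"
  unfolding pairs_def by (simp add: sum.cartesian_product')

lemma fin_triples: "finite (triples N)" unfolding triples_def by simp
lemma fin_pairs: "finite (pairs N)" unfolding pairs_def by simp

lemma op12_mm:
  assumes "x \<in> triples N"
  shows "mmul (triples N) (op12 X) (op12 Y) x y = op12 (mmul (pairs N) X Y) x y"
proof -
  obtain a b c where x: "x = (a,b,c)" by (cases x) auto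
  obtain a' b' c' where y: "y = (a',b',c')" by (cases y) auto
  have c: "c \<in> {1..N}" using assms x by (simp add: triples_def)
  have inner: "(\<Sum>z3\<in>{1..N}. X (a, b) (z1, z2) * idm c z3 * (Y (z1, z2) (a', b') * idm z3 c'))
     = X (a, b) (z1, z2) * Y (z1, z2) (a', b') * idm c c'" for z1 z2
    using c by (subst sum_delta_gen[where c=c]) (auto simp: idm_def)
  show ?thesis
    unfolding x y mmul_def sum_triples sum_pairs op12_def prod.case by (simp only: inner sum_distrib_right)
qed

lemma op23_mm:
  assumes "x \<in> triples N"
  shows "mmul (triples N) (op23 X) (op23 Y) x y = op23 (mmul (pairs N) X Y) x y"
proof -
  obtain a b c where x: "x = (a,b,c)" by (cases x) auto
  obtain a' b' c' where y: "y = (a',b',c')" by (cases y) auto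
  have a: "a \<in> {1..N}" using assms x by (simp add: triples_def)
  have "(\<Sum>z1\<in>{1..N}. \<Sum>z2\<in>{1..N}. \<Sum>z3\<in>{1..N}. idm a z1 * X (b, c) (z2, z3) * (idm z1 a' * Y (z2, z3) (b', c')))
     = (\<Sum>z2\<in>{1..N}. \<Sum>z3\<in>{1..N}. X (b, c) (z2, z3) * Y (z2, z3) (b', c') * idm a a')"
    by (rule trans[OF sum_delta_gen[where c=a]]) (use a in \<open>auto simp: idm_def\<close>)
  then show ?thesis
    unfolding x y mmul_def sum_triples sum_pairs op23_def prod.case by (simp add: sum_distrib_left mult.commute)
qed



locale FG =
  fixes N :: nat and F G :: "nat \<times> nat \<Rightarrow> complex" and k :: complex
  assumes HF: "\<And>a b. F (a,b) \<noteq> 0 \<Longrightarrow> b \<in> {1..N} \<and> a = N + 1 - b"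
    and HG: "\<And>c e. G (c,e) \<noteq> 0 \<Longrightarrow> c \<in> {1..N} \<and> e = N + 1 - c"
    and H1: "\<And>i. i \<in> {1..N} \<Longrightarrow> G (i, N + 1 - i) * F (N + 1 - i, i) = 1"
begin

definition PP :: "nat \<times> nat \<Rightarrow> nat \<times> nat \<Rightarrow> complex" where
  "PP x y = k * F x * G y"

lemma BA:
  assumes c': "c' \<in> {1..N}"
  shows "mmul (triples N) (op23 PP) (op12 PP) (u1,u2,u3) (a',b',c') = k^2 * F(u2,u3) * G(a',b') * idm u1 c'"
proof -
  have "mmul (triples N) (op23 PP) (op12 PP) (u1,u2,u3) (a',b',c') =
     (\<Sum>v\<in>triples N. op23 PP (u1,u2,u3) v * op12 PP v (a',b',c'))"
    by (simp add: mmul_def)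
  also have "\<dots> = (if (u1, N+1-c', c') \<in> triples N then op23 PP (u1,u2,u3) (u1, N+1-c', c') * op12 PP (u1, N+1-c', c') (a',b',c') else 0)"
  proof (rule sum_delta_gen[OF fin_triples])
    fix v assume "v \<in> triples N" "v \<noteq> (u1, N + 1 - c', c')"
    moreover obtain v1 v2 v3 where v: "v = (v1,v2,v3)" by (cases v) auto
    ultimately have "v1 \<noteq> u1 \<or> v3 \<noteq> c' \<or> G (v2,v3) = 0" using HG[of v2 v3] c' by (cases "G (v2,v3) = 0") auto
    then show "op23 PP (u1, u2, u3) v * op12 PP v (a', b', c') = 0"
      by (auto simp: v op12_def op23_def idm_def PP_def)
  qed
  also have "\<dots> = k^2 * F(u2,u3) * G(a',b') * idm u1 c'"
  proof (cases "u1 = c'")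
    case True
    have e: "N + 1 - (N + 1 - c') = c'" using c' by auto
    have "N + 1 - c' \<in> {1..N}" using c' by auto
    from H1[OF this] have h: "G (N + 1 - c', c') * F (c', N + 1 - c') = 1" by (simp only: e)
    have p: "(u1, N+1-c', c') \<in> triples N" using True c' by (auto simp: triples_def)
    have "op23 PP (u1,u2,u3) (u1,N+1-c',c') * op12 PP (u1,N+1-c',c') (a',b',c')
        = k^2 * F(u2,u3) * G(a',b') * (G (N + 1 - c', c') * F (c', N + 1 - c'))"
      using True by (simp add: op12_def op23_def idm_def PP_def power2_eq_square mult_ac)
    then show ?thesis using p h True by (simp add: idm_def)
  next
    case False
    have "F (u1, N + 1 - c') = 0" using HF[of u1 "N+1-c'"] False c' by auto
    then show ?thesis using False by (simp add: op12_def op23_def idm_def PP_def)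
  qed
  finally show ?thesis .
qed

lemma AB:
  assumes a': "a' \<in> {1..N}"
  shows "mmul (triples N) (op12 PP) (op23 PP) (u1,u2,u3) (a',b',c') = k^2 * F(u1,u2) * G(b',c') * idm u3 a'"
proof -
  have "mmul (triples N) (op12 PP) (op23 PP) (u1,u2,u3) (a',b',c') =
     (\<Sum>v\<in>triples N. op12 PP (u1,u2,u3) v * op23 PP v (a',b',c'))"
    by (simp add: mmul_def)
  also have "\<dots> = (if (a', N+1-a', u3) \<in> triples N then op12 PP (u1,u2,u3) (a', N+1-a', u3) * op23 PP (a', N+1-a', u3) (a',b',c') else 0)"
  proof (rule sum_delta_gen[OF fin_triples])
    fix v assume "v \<in> triples N" "v \<noteq> (a', N + 1 - a', u3)"
    moreover obtain v1 v2 v3 where v: "v = (v1,v2,v3)" by (cases v) auto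
    ultimately have "v1 \<noteq> a' \<or> v3 \<noteq> u3 \<or> G (v1,v2) = 0" using HG[of v1 v2] a' by (cases "G (v1,v2) = 0") auto
    then show "op12 PP (u1, u2, u3) v * op23 PP v (a', b', c') = 0"
      by (auto simp: v op12_def op23_def idm_def PP_def)
  qed
  also have "\<dots> = k^2 * F(u1,u2) * G(b',c') * idm u3 a'"
  proof (cases "u3 = a'")
    case True
    from H1[OF a'] have h: "G (a', N + 1 - a') * F (N + 1 - a', a') = 1" .
    have p: "(a', N+1-a', u3) \<in> triples N" using True a' by (auto simp: triples_def)
    have "op12 PP (u1,u2,u3) (a', N+1-a', u3) * op23 PP (a', N+1-a', u3) (a',b',c')
        = k^2 * F(u1,u2) * G(b',c') * (G (a', N + 1 - a') * F (N + 1 - a', a'))"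
      using True by (simp add: op12_def op23_def idm_def PP_def power2_eq_square mult_ac)
    then show ?thesis using p h True by (simp add: idm_def)
  next
    case False
    have "F (N + 1 - a', u3) = 0" using HF[of "N+1-a'" u3] False a' by (cases "F (N + 1 - a', u3) = 0") auto
    then show ?thesis using False by (simp add: op12_def op23_def idm_def PP_def)
  qed
  finally show ?thesis .
qed

lemma ABA:
  assumes x: "x \<in> triples N" and y: "y \<in> triples N"
  shows "mmul (triples N) (op12 PP) (mmul (triples N) (op23 PP) (op12 PP)) x y = k^2 * op12 PP x y"
proof -
  obtain a b c where xe: "x = (a,b,c)" by (cases x) auto
  obtain a' b' c' where ye: "y = (a',b',c')" by (cases y) auto
  have c: "c \<in> {1..N}" and c': "c' \<in> {1..N}" using x y xe ye by (auto simp: triples_def)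
  have "mmul (triples N) (op12 PP) (mmul (triples N) (op23 PP) (op12 PP)) x y =
     (\<Sum>u\<in>triples N. op12 PP (a,b,c) u * (k^2 * F(fst (snd u), snd (snd u)) * G(a',b') * idm (fst u) c'))"
    unfolding mmul_def[of "triples N" "op12 PP"] xe ye
    by (rule sum.cong) (auto simp: BA[OF c'])
  also have "\<dots> = (if (c', N+1-c', c) \<in> triples N then op12 PP (a,b,c) (c', N+1-c', c) * (k^2 * F(N+1-c', c) * G(a',b') * idm c' c') else 0)"
  proof (rule trans[OF sum_delta_gen[OF fin_triples]])
    fix v assume "v \<in> triples N" "v \<noteq> (c', N + 1 - c', c)"
    moreover obtain v1 v2 v3 where v: "v = (v1,v2,v3)" by (cases v) auto
    ultimately have "v1 \<noteq> c' \<or> v3 \<noteq> c \<or> G (v1,v2) = 0" using HG[of v1 v2] c' by (cases "G (v1,v2) = 0") auto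
    then show "op12 PP (a,b,c) v * (k^2 * F(fst (snd v), snd (snd v)) * G(a',b') * idm (fst v) c') = 0"
      by (auto simp: v op12_def idm_def PP_def)
  qed simp
  also have "\<dots> = k^2 * op12 PP x y"
  proof (cases "c = c'")
    case True
    from H1[OF c] have h: "G (c, N + 1 - c) * F (N + 1 - c, c) = 1" .
    have p: "(c', N+1-c', c) \<in> triples N" using True c by (auto simp: triples_def)
    have "op12 PP (a,b,c) (c', N+1-c', c) * (k^2 * F(N+1-c', c) * G(a',b') * idm c' c')
        = k^2 * (k * F(a,b) * G(a',b')) * (G (c, N + 1 - c) * F (N + 1 - c, c))"
      using True by (simp add: op12_def idm_def PP_def power2_eq_square mult_ac)
    then show ?thesis using p h True xe ye by (simp add: op12_def idm_def PP_def)
  next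
    case False
    have "F (N + 1 - c', c) = 0" using HF[of "N+1-c'" c] False c c' by (cases "F (N + 1 - c', c) = 0") auto
    then show ?thesis using False xe ye by (simp add: op12_def idm_def PP_def)
  qed
  finally show ?thesis .
qed

lemma BAB:
  assumes x: "x \<in> triples N" and y: "y \<in> triples N"
  shows "mmul (triples N) (op23 PP) (mmul (triples N) (op12 PP) (op23 PP)) x y = k^2 * op23 PP x y"
proof -
  obtain a b c where xe: "x = (a,b,c)" by (cases x) auto
  obtain a' b' c' where ye: "y = (a',b',c')" by (cases y) auto
  have a: "a \<in> {1..N}" and a': "a' \<in> {1..N}" using x y xe ye by (auto simp: triples_def)
  have "mmul (triples N) (op23 PP) (mmul (triples N) (op12 PP) (op23 PP)) x y =
     (\<Sum>u\<in>triples N. op23 PP (a,b,c) u * (k^2 * F(fst u, fst (snd u)) * G(b',c') * idm (snd (snd u)) a'))"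
    unfolding mmul_def[of "triples N" "op23 PP"] xe ye
    by (rule sum.cong) (auto simp: AB[OF a'])
  also have "\<dots> = (if (a, N+1-a', a') \<in> triples N then op23 PP (a,b,c) (a, N+1-a', a') * (k^2 * F(a, N+1-a') * G(b',c') * idm a' a') else 0)"
  proof (rule trans[OF sum_delta_gen[OF fin_triples]])
    fix v assume "v \<in> triples N" "v \<noteq> (a, N + 1 - a', a')"
    moreover obtain v1 v2 v3 where v: "v = (v1,v2,v3)" by (cases v) auto
    ultimately have "v1 \<noteq> a \<or> v3 \<noteq> a' \<or> G (v2,v3) = 0" using HG[of v2 v3] a' by (cases "G (v2,v3) = 0") auto
    then show "op23 PP (a,b,c) v * (k^2 * F(fst v, fst (snd v)) * G(b',c') * idm (snd (snd v)) a') = 0"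
      by (auto simp: v op23_def idm_def PP_def)
  qed simp
  also have "\<dots> = k^2 * op23 PP x y"
  proof (cases "a = a'")
    case True
    have e: "N + 1 - (N + 1 - a') = a'" using a' by auto
    have "N + 1 - a' \<in> {1..N}" using a' by auto
    from H1[OF this] have h: "G (N + 1 - a', a') * F (a', N + 1 - a') = 1" by (simp only: e)
    have p: "(a, N+1-a', a') \<in> triples N" using True a a' by (auto simp: triples_def)
    have "op23 PP (a,b,c) (a, N+1-a', a') * (k^2 * F(a, N+1-a') * G(b',c') * idm a' a')
        = k^2 * (k * F(b,c) * G(b',c')) * (G (N + 1 - a', a') * F (a', N + 1 - a'))"
      using True by (simp add: op23_def idm_def PP_def power2_eq_square mult_ac)
    then show ?thesis using p h True xe ye by (simp add: op23_def idm_def PP_def)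
  next
    case False
    have "F (a, N + 1 - a') = 0" using HF[of a "N+1-a'"] False a a' by (cases "F (a, N + 1 - a') = 0") auto
    then show ?thesis using False xe ye by (simp add: op23_def idm_def PP_def)
  qed
  finally show ?thesis .
qed

definition sig :: complex where "sig = (\<Sum>i\<in>{1..N}. G (i, N + 1 - i) * F (i, N + 1 - i))"

lemma PPsq: "mmul (pairs N) PP PP x y = k * sig * PP x y"
proof -
  have "(\<Sum>z\<in>pairs N. G z * F z) = sig"
    unfolding sum_pairs sig_def
  proof (rule sum.cong[OF refl])
    fix i assume i: "i \<in> {1..N}"
    show "(\<Sum>z2\<in>{1..N}. G (i, z2) * F (i, z2)) = G (i, N + 1 - i) * F (i, N + 1 - i)"
    proof (rule trans[OF sum_delta_gen[where c="N+1-i"]])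
      fix j assume "j \<in> {1..N}" "j \<noteq> N + 1 - i"
      then show "G (i, j) * F (i, j) = 0" using HG[of i j] by (cases "G (i,j) = 0") auto
    qed (use i in auto)
  qed
  have "mmul (pairs N) PP PP x y = (\<Sum>z\<in>pairs N. (k * k * F x * G y) * (G z * F z))"
    unfolding mmul_def PP_def by (rule sum.cong[OF refl]) (simp add: mult_ac)
  also have "\<dots> = (k * k * F x * G y) * (\<Sum>z\<in>pairs N. G z * F z)"
    by (simp add: sum_distrib_left)
  finally show ?thesis using \<open>(\<Sum>z\<in>pairs N. G z * F z) = sig\<close> by (simp add: PP_def mult_ac)
qed

end


lemma qnum_sum:
  assumes q: "q > 0"
  shows "qnum q (real m) = (\<Sum>j<m. q powr (real m - 1 - 2 * real j))"
proof (cases "q = 1")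
  case True then show ?thesis by (simp add: qnum_def)
next
  case False
  have nz: "q - 1 / q \<noteq> 0"
  proof
    assume "q - 1 / q = 0"
    then have "q * q = 1" using q by (simp add: field_simps)
    then have "q^2 = 1" by (simp add: power2_eq_square)
    then have "q = 1 \<or> q = -1" by (simp add: power2_eq_1_iff)
    then have "q = 1" using q by auto
    then show False using False by simp
  qed
  define h where "h j = q powr (real m - 2 * real j)" for j :: nat
  have t: "(q - 1 / q) * q powr (real m - 1 - 2 * real j) = h j - h (Suc j)" for j
  proof -
    have "q powr (real m - 1 - 2 * real j) * q = q powr ((real m - 1 - 2 * real j) + 1)"
      using q by (simp only: powr_add) simp
    then have "h j = q powr (real m - 1 - 2 * real j) * q"
      unfolding h_def by simp
    moreover have "q powr (real m - 1 - 2 * real j) / q = q powr ((real m - 1 - 2 * real j) - 1)"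
      using q by (simp only: powr_diff) simp
    then have "h (Suc j) = q powr (real m - 1 - 2 * real j) / q"
      unfolding h_def by (simp add: algebra_simps)
    ultimately show ?thesis by (simp add: algebra_simps)
  qed
  have "(q - 1 / q) * (\<Sum>j<m. q powr (real m - 1 - 2 * real j)) = h 0 - h m"
    by (simp add: sum_distrib_left t sum_lessThan_telescope')
  also have "\<dots> = q powr real m - q powr (- real m)" by (simp add: h_def)
  finally show ?thesis using nz False by (simp add: qnum_def field_simps)
qed



lemma caseA:
  assumes N: "N = 2*n+1" and q: "q > 0"
  shows "(\<Sum>i\<in>{1..N}. q powr (-2 * rho 1 N i)) = 1 + (\<Sum>j<2*n. q powr (real (2*n) - 1 - 2 * real j))"
proof -
  have nd: "N div 2 = n" "odd N" using N by auto
  have r: "rho 1 N i = (if i \<le> n then real n + 1/2 - real i else if i = n+1 then 0 else real n + 3/2 - real i)" for i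
    using nd by (simp add: rho_def Let_def algebra_simps)
  have "(\<Sum>i\<in>{1..N}. q powr (-2 * rho 1 N i)) = q powr (-2 * rho 1 N (n+1)) + (\<Sum>i\<in>{1..N}-{n+1}. q powr (-2 * rho 1 N i))"
    by (rule sum.remove) (auto simp: N)
  also have "q powr (-2 * rho 1 N (n+1)) = 1" using q by (simp add: r)
  also have "(\<Sum>i\<in>{1..N}-{n+1}. q powr (-2 * rho 1 N i)) = (\<Sum>j<2*n. q powr (real (2*n) - 1 - 2 * real j))"
  proof (rule sum.reindex_bij_witness[where j="\<lambda>c. if c \<le> n then 2*n - c else 2*n+1-c"
        and i="\<lambda>j. if j \<ge> n then 2*n - j else 2*n+1-j"])
    fix c assume c: "c \<in> {1..N}-{n+1}"
    show "q powr (real (2*n) - 1 - 2 * real (if c \<le> n then 2*n - c else 2*n+1-c)) = q powr (-2 * rho 1 N c)"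
    proof -
      have "1 \<le> c" "c \<le> 2*n+1" "c \<noteq> n+1" using c N by auto
      then show ?thesis by (auto simp: r of_nat_diff algebra_simps)
    qed
  qed (auto simp: N)
  finally show ?thesis .
qed

lemma caseB:
  assumes N: "N = 2*n" and n: "n \<ge> 1" and q: "q > 0"
  shows "(\<Sum>i\<in>{1..N}. q powr (-2 * rho 1 N i)) = 1 + (\<Sum>j<2*n-1. q powr (real (2*n-1) - 1 - 2 * real j))"
proof -
  have nd: "N div 2 = n" "even N" using N by auto
  have r: "rho 1 N i = (if i \<le> n then real n - real i else real n + 1 - real i)" for i
    using nd by (simp add: rho_def Let_def algebra_simps)
  have "(\<Sum>i\<in>{1..N}. q powr (-2 * rho 1 N i)) = q powr (-2 * rho 1 N n) + (\<Sum>i\<in>{1..N}-{n}. q powr (-2 * rho 1 N i))"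
    by (rule sum.remove) (use n in \<open>auto simp: N\<close>)
  also have "q powr (-2 * rho 1 N n) = 1" using q by (simp add: r)
  also have "(\<Sum>i\<in>{1..N}-{n}. q powr (-2 * rho 1 N i)) = (\<Sum>j<2*n-1. q powr (real (2*n-1) - 1 - 2 * real j))"
  proof (rule sum.reindex_bij_witness[where j="\<lambda>c. if c < n then 2*n - 1 - c else 2*n-c"
        and i="\<lambda>j. if j \<ge> n then 2*n - 1 - j else 2*n-j"])
    fix c assume c: "c \<in> {1..N}-{n}"
    show "q powr (real (2*n-1) - 1 - 2 * real (if c < n then 2*n - 1 - c else 2*n-c)) = q powr (-2 * rho 1 N c)"
    proof -
      have "1 \<le> c" "c \<le> 2*n" "c \<noteq> n" using c N by auto
      then show ?thesis using n by (auto simp: r of_nat_diff algebra_simps)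
    qed
  qed (use n in \<open>auto simp: N\<close>)
  finally show ?thesis .
qed

lemma caseC:
  assumes N: "N = 2*n" and q: "q > 0"
  shows "(\<Sum>i\<in>{1..N}. q powr (-2 * rho (-1) N i)) = (\<Sum>j<2*n+1. q powr (real (2*n+1) - 1 - 2 * real j)) - 1"
proof -
  have nd: "N div 2 = n" using N by auto
  have r: "rho (-1) N i = (if i \<le> n then real n + 1 - real i else real n - real i)" for i
    using nd by (simp add: rho_def Let_def algebra_simps)
  have "(\<Sum>j<2*n+1. q powr (real (2*n+1) - 1 - 2 * real j)) = q powr (real (2*n+1) - 1 - 2 * real n) + (\<Sum>j\<in>{..<2*n+1}-{n}. q powr (real (2*n+1) - 1 - 2 * real j))"
    by (rule sum.remove) auto
  also have "q powr (real (2*n+1) - 1 - 2 * real n) = 1" using q by simp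
  also have "(\<Sum>j\<in>{..<2*n+1}-{n}. q powr (real (2*n+1) - 1 - 2 * real j)) = (\<Sum>i\<in>{1..N}. q powr (-2 * rho (-1) N i))"
  proof (rule sum.reindex_bij_witness[where i="\<lambda>c. if c \<le> n then 2*n + 1 - c else 2*n-c"
        and j="\<lambda>j. if j > n then 2*n + 1 - j else 2*n-j"])
    fix j assume j: "j \<in> {..<2*n+1}-{n}"
    show "q powr (-2 * rho (-1) N (if j > n then 2*n + 1 - j else 2*n-j)) = q powr (real (2*n+1) - 1 - 2 * real j)"
      using j by (auto simp: r of_nat_diff algebra_simps)
  qed (auto simp: N)
  finally show ?thesis by simp
qed



lemma prod_abs:
  assumes fin: "finite S" and xS: "x \<in> S" and yS: "y \<in> S"
    and PPh: "\<And>x y. mmul S P P x y = P x y"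
    and ab: "a + b + a * b = 0"
  shows "mmul S (\<lambda>x y. idm x y + a * P x y) (\<lambda>x y. idm x y + b * P x y) x y = idm x y"
proof -
  have "mmul S (\<lambda>x y. idm x y + a * P x y) (\<lambda>x y. idm x y + b * P x y) x y
      = idm x y + (a + b + a * b) * P x y"
    using fin xS yS by (simp add: mm_add_left mm_add_right mm_scal_left mm_scal_right mm_idl mm_idr PPh algebra_simps)
  then show ?thesis using ab by simp
qed

lemma rho_sym:
  assumes heps: "eps = 1 \<or> eps = -1" and heven: "eps = -1 \<longrightarrow> even N" and i: "i \<in> {1..N}"
  shows "rho eps N (N + 1 - i) = - rho eps N i"
proof -
  obtain n where "N = 2*n \<or> N = 2*n+1" by (metis oddE evenE)
  then show ?thesis using heps heven i
    by (auto simp: rho_def Let_def of_nat_diff algebra_simps)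
qed

lemma sgn_sym:
  assumes heps: "eps = 1 \<or> eps = -1" and heven: "eps = -1 \<longrightarrow> even N" and i: "i \<in> {1..N}"
  shows "sgn_i eps N i * sgn_i eps N (N + 1 - i) = real_of_int eps"
  using heps heven i by (auto simp: sgn_i_def elim!: evenE)

lemma sig_real:
  assumes heps: "eps = 1 \<or> eps = -1" and hN: "N \<ge> 2" and heven: "eps = -1 \<longrightarrow> even N" and q: "q > 0"
  shows "(\<Sum>i\<in>{1..N}. q powr (rho eps N (N + 1 - i) - rho eps N i) * (sgn_i eps N i * sgn_i eps N (N + 1 - i)))
       = 1 + real_of_int eps * qnum q (real N - real_of_int eps)"
proof -
  have "(\<Sum>i\<in>{1..N}. q powr (rho eps N (N + 1 - i) - rho eps N i) * (sgn_i eps N i * sgn_i eps N (N + 1 - i)))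
      = real_of_int eps * (\<Sum>i\<in>{1..N}. q powr (-2 * rho eps N i))"
    unfolding sum_distrib_left
  proof (rule sum.cong[OF refl])
    fix i assume i: "i \<in> {1..N}"
    have e: "rho eps N (N + 1 - i) - rho eps N i = -2 * rho eps N i"
      using rho_sym[OF heps heven i] by simp
    show "q powr (rho eps N (N + 1 - i) - rho eps N i) * (sgn_i eps N i * sgn_i eps N (N + 1 - i))
        = real_of_int eps * q powr (-2 * rho eps N i)"
      by (simp only: e sgn_sym[OF heps heven i]) (rule mult.commute)
  qed
  also have "\<dots> = 1 + real_of_int eps * qnum q (real N - real_of_int eps)"
  proof (cases "eps = 1")
    case True
    show ?thesis
    proof (cases "even N")
      case True
      then obtain n where N: "N = 2*n" by (auto elim: evenE)
      with hN have n: "n \<ge> 1" by auto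
      have e: "real N - real_of_int eps = real (2*n-1)" using N n \<open>eps = 1\<close> by auto
      have qq: "qnum q (real N - real_of_int eps) = (\<Sum>j<2*n-1. q powr (real (2*n-1) - 1 - 2 * real j))"
        unfolding e by (rule qnum_sum[OF q])
      show ?thesis unfolding qq using \<open>eps = 1\<close> caseB[OF N n q] by simp
    next
      case False
      then obtain n where N: "N = 2*n+1" by (auto elim: oddE)
      have e: "real N - real_of_int eps = real (2*n)" using N \<open>eps = 1\<close> by auto
      have qq: "qnum q (real N - real_of_int eps) = (\<Sum>j<2*n. q powr (real (2*n) - 1 - 2 * real j))"
        unfolding e by (rule qnum_sum[OF q])
      show ?thesis unfolding qq using \<open>eps = 1\<close> caseA[OF N q] by simp
    qed
  next
    case False
    then have em: "eps = -1" using heps by auto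
    then obtain n where N: "N = 2*n" using heven by (auto elim: evenE)
    have e: "real N - real_of_int eps = real (2*n+1)" using N em by auto
    have qq: "qnum q (real N - real_of_int eps) = (\<Sum>j<2*n+1. q powr (real (2*n+1) - 1 - 2 * real j))"
      unfolding e by (rule qnum_sum[OF q])
    show ?thesis unfolding qq using em caseC[OF N q] by simp
  qed
  finally show ?thesis .
qed



theorem mainTheorem6:
  fixes eps :: int and N :: nat and q :: real
  defines "d \<equiv> dconst eps N q"
  defines "wp \<equiv> complex_of_real ((-1 + sqrt (1 - 4 * d\<^sup>2)) / (2 * d\<^sup>2))"
  defines "wm \<equiv> complex_of_real ((-1 - sqrt (1 - 4 * d\<^sup>2)) / (2 * d\<^sup>2))"
  assumes heps: "eps = 1 \<or> eps = -1"
    and hN: "N \<ge> 2"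
    and heven: "eps = -1 \<longrightarrow> even N"
    and hq: "q > 0"
    and hnz: "1 + real_of_int eps * qnum q (real N - real_of_int eps) \<noteq> 0"
    and hd: "4 * d\<^sup>2 < 1"
  shows "(\<forall>w\<in>{wp, wm}. \<forall>x\<in>triples N. \<forall>y\<in>triples N.
            mmul (triples N) (mmul (triples N) (op12 (Rhat eps N q w)) (op23 (Rhat eps N q w)))
                 (op12 (Rhat eps N q w)) x y
          = mmul (triples N) (mmul (triples N) (op23 (Rhat eps N q w)) (op12 (Rhat eps N q w)))
                 (op23 (Rhat eps N q w)) x y)
       \<and> (\<forall>x\<in>pairs N. \<forall>y\<in>pairs N.
            mmul (pairs N) (Rhat eps N q wp) (Rhat eps N q wm) x y = idm x y)
       \<and> (\<forall>w::complex. \<forall>x\<in>pairs N. \<forall>y\<in>pairs N.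
            Rhat eps N q w x y
          = ((w - wm) * Rhat eps N q wp x y - (w - wp) * Rhat eps N q wm x y) / (wp - wm))"
proof -
  define f where "f b = complex_of_real (q powr rho eps N b * sgn_i eps N b)" for b
  define g where "g c = complex_of_real (q powr (- rho eps N c) * sgn_i eps N c)" for c
  define F where "F = FF N f"
  define G where "G = GG N g"
  define k where "k = complex_of_real d"
  have sg2: "sgn_i eps N i * sgn_i eps N i = 1" for i by (simp add: sgn_i_def)
  interpret FG N F G k
  proof
    fix a b assume "F (a,b) \<noteq> 0" then show "b \<in> {1..N} \<and> a = N + 1 - b"
      by (auto simp: F_def FF_def split: if_splits)
  next
    fix c e assume "G (c,e) \<noteq> 0" then show "c \<in> {1..N} \<and> e = N + 1 - c"
      by (auto simp: G_def GG_def split: if_splits)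
  next
    fix i assume i: "i \<in> {1..N}"
    then have "G (i, N + 1 - i) * F (N + 1 - i, i) = g i * f i"
      by (auto simp: F_def G_def FF_def GG_def)
    also have "\<dots> = complex_of_real ((q powr (- rho eps N i) * q powr rho eps N i) * (sgn_i eps N i * sgn_i eps N i))"
      by (simp add: f_def g_def algebra_simps)
    also have "\<dots> = 1" using hq by (simp add: sg2 powr_minus)
    finally show "G (i, N + 1 - i) * F (N + 1 - i, i) = 1" .
  qed
  have P0e: "P0 eps N q = PP"
  proof (intro ext)
    fix x y
    show "P0 eps N q x y = PP x y"
      unfolding PP_def unfolding F_def G_def f_def[abs_def] g_def[abs_def] by (simp add: P0_eq k_def d_def)
  qed
  have Re: "Rhat eps N q w = (\<lambda>x y. idm x y + w * PP x y)" for w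
    by (simp add: fun_eq_iff Rhat_def P0e)
  have idm3: "idm (a,b) (a',b') * idm c c' = idm (a,b,c) (a',b',c')" "idm a a' * idm (b,c) (b',c') = idm (a,b,c) (a',b',c')"
    for a b c a' b' c' :: nat by (auto simp: idm_def)
  have R12: "op12 (Rhat eps N q w) = (\<lambda>x y. idm x y + w * op12 PP x y)" for w
    by (auto simp: fun_eq_iff Re op12_def idm_def algebra_simps)
  have R23: "op23 (Rhat eps N q w) = (\<lambda>x y. idm x y + w * op23 PP x y)" for w
    by (auto simp: fun_eq_iff Re op23_def idm_def algebra_simps)
  have dnz: "d \<noteq> 0" using hnz by (simp add: d_def dconst_def)
  have sigv: "k * sig = 1"
  proof -
    have "sig = (\<Sum>i\<in>{1..N}. g i * f (N + 1 - i))"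
      unfolding sig_def by (rule sum.cong[OF refl]) (auto simp: F_def G_def FF_def GG_def)
    also have "\<dots> = complex_of_real (\<Sum>i\<in>{1..N}. q powr (rho eps N (N + 1 - i) - rho eps N i) * (sgn_i eps N i * sgn_i eps N (N + 1 - i)))"
      unfolding of_real_sum
      by (rule sum.cong[OF refl]) (use hq in \<open>simp add: f_def g_def powr_diff powr_minus divide_inverse algebra_simps\<close>)
    also have "\<dots> = complex_of_real (1 / d)"
      using sig_real[OF heps hN heven hq] by (simp add: d_def dconst_def)
    finally show ?thesis using dnz by (simp add: k_def)
  qed
  have PPsq': "mmul (pairs N) PP PP x y = PP x y" for x y using PPsq sigv by simp
  define s where "s = sqrt (1 - 4 * d\<^sup>2)"
  have s2: "s^2 = 1 - 4 * d^2" unfolding s_def using hd by simp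
  have spos: "s > 0" unfolding s_def using hd by simp
  have d2: "d^2 \<noteq> 0" using dnz by simp
  have wpe: "wp = complex_of_real ((-1 + s) / (2 * d^2))" by (simp add: wp_def s_def)
  have wme: "wm = complex_of_real ((-1 - s) / (2 * d^2))" by (simp add: wm_def s_def)
  have quad: "w + w^2 + k^2 * w^3 = 0" if wmem: "w \<in> {wp, wm}" for w
  proof -
    have "r + r^2 + d^2 * r^3 = 0" if "r = (-1 + s) / (2 * d^2) \<or> r = (-1 - s) / (2 * d^2)" for r
    proof -
      have t: "2 * d^2 * r + 1 = s \<or> 2 * d^2 * r + 1 = - s" using that d2 by auto
      have t1: "(2 * d^2 * r + 1)^2 = s^2" using t by auto
      have key: "4 * d^2 * (d^2 * r^2 + r + 1) = (2 * d^2 * r + 1)^2 - 1 + 4 * d^2"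
        by (simp add: power2_eq_square algebra_simps)
      have "4 * d^2 * (d^2 * r^2 + r + 1) = 0" unfolding key t1 s2 by simp
      then have "d^2 * r^2 + r + 1 = 0" using d2 by simp
      then have "r * (d^2 * r^2 + r + 1) = 0" by simp
      then show ?thesis by (simp add: algebra_simps power2_eq_square power3_eq_cube)
    qed
    note rr = this
    obtain r where wr: "w = complex_of_real r" and r: "r = (-1 + s) / (2 * d^2) \<or> r = (-1 - s) / (2 * d^2)"
    proof (cases "w = wp")
      case True
      have a: "w = complex_of_real ((-1 + s) / (2 * d^2))" using True wpe by (simp only:)
      show ?thesis by (rule that[OF a]) simp
    next
      case False
      then have "w = wm" using wmem by auto
      then have a: "w = complex_of_real ((-1 - s) / (2 * d^2))" using wme by (simp only:)
      show ?thesis by (rule that[OF a]) simp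
    qed
    have "w + w^2 + k^2 * w^3 = complex_of_real (r + r^2 + d^2 * r^3)"
      unfolding wr k_def by simp
    then show ?thesis using rr[OF r] by simp
  qed
  show ?thesis
  proof (intro conjI)
    show "\<forall>w\<in>{wp, wm}. \<forall>x\<in>triples N. \<forall>y\<in>triples N.
            mmul (triples N) (mmul (triples N) (op12 (Rhat eps N q w)) (op23 (Rhat eps N q w)))
                 (op12 (Rhat eps N q w)) x y
          = mmul (triples N) (mmul (triples N) (op23 (Rhat eps N q w)) (op12 (Rhat eps N q w)))
                 (op23 (Rhat eps N q w)) x y"
    proof (intro ballI)
      fix w x y assume w: "w \<in> {wp, wm}" and x: "x \<in> triples N" and y: "y \<in> triples N"
      show "mmul (triples N) (mmul (triples N) (op12 (Rhat eps N q w)) (op23 (Rhat eps N q w)))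
                 (op12 (Rhat eps N q w)) x y
          = mmul (triples N) (mmul (triples N) (op23 (Rhat eps N q w)) (op12 (Rhat eps N q w)))
                 (op23 (Rhat eps N q w)) x y"
        unfolding R12 R23
      proof (rule braid_abs[OF fin_triples x y _ _ ABA BAB quad[OF w]])
        fix x y assume "x \<in> triples N" "y \<in> triples N"
        then show "mmul (triples N) (op12 PP) (op12 PP) x y = op12 PP x y"
          by (simp add: op12_mm) (simp add: op12_def PPsq' split: prod.splits)
      next
        fix x y assume "x \<in> triples N" "y \<in> triples N"
        then show "mmul (triples N) (op23 PP) (op23 PP) x y = op23 PP x y"
          by (simp add: op23_mm) (simp add: op23_def PPsq' split: prod.splits)
      qed
    qed
  next
    have ab: "wp + wm + wp * wm = 0"
    proof -
      have m: "(-1 + s) * (-1 - s) = 4 * d^2" using s2 by (simp add: algebra_simps power2_eq_square)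
      have "(-1 + s) / (2 * d^2) + (-1 - s) / (2 * d^2) = - 1 / d^2"
        using d2 by (simp add: field_simps)
      moreover have "((-1 + s) / (2 * d^2)) * ((-1 - s) / (2 * d^2)) = 1 / d^2"
      proof -
        have "((-1 + s) / (2 * d^2)) * ((-1 - s) / (2 * d^2)) = ((-1 + s) * (-1 - s)) / ((2 * d^2) * (2 * d^2))"
          by (rule times_divide_times_eq)
        also have "\<dots> = (4 * d^2) / ((2 * d^2) * (2 * d^2))" by (simp only: m)
        also have "\<dots> = 1 / d^2" using d2 by (simp add: field_simps)
        finally show ?thesis .
      qed
      ultimately have "(-1 + s) / (2 * d^2) + (-1 - s) / (2 * d^2) + ((-1 + s) / (2 * d^2)) * ((-1 - s) / (2 * d^2)) = 0"
        by simp
      then show ?thesis unfolding wpe wme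
        by (metis of_real_0 of_real_add of_real_mult)
    qed
    show "\<forall>x\<in>pairs N. \<forall>y\<in>pairs N. mmul (pairs N) (Rhat eps N q wp) (Rhat eps N q wm) x y = idm x y"
      unfolding Re using prod_abs[OF fin_pairs _ _ PPsq' ab] by blast
  next
    have ne: "wp - wm \<noteq> 0"
    proof
      assume "wp - wm = 0"
      then have "(-1 + s) / (2 * d^2) = (-1 - s) / (2 * d^2)" unfolding wpe wme by simp
      then show False using d2 spos by (simp add: field_simps)
    qed
    show "\<forall>w::complex. \<forall>x\<in>pairs N. \<forall>y\<in>pairs N.
            Rhat eps N q w x y
          = ((w - wm) * Rhat eps N q wp x y - (w - wp) * Rhat eps N q wm x y) / (wp - wm)"
      using ne by (auto simp: Re field_simps)
  qed
qed

end
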